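(* Let $(X,w)$ be a weighted system in a real Euclidean affine space. Then $\mu_1$ is identically $\overrightarrow{O}$ if and only if $\mu_0=0$ and $\sum_{z\in X}w(z)\left(\overrightarrow{xy}^2-\overrightarrow{yz}^2+\overrightarrow{zx}^2\right)=0$ for every $x,y\in X$.
   Context: A weighted system is a finite set $X$ of points with $w:X\to\mathbb{R}$. $\mu_0=\sum_xw(x)$, $\mu_1(p)=\sum_xw(x)\overrightarrow{px}$; the square of a vector is its inner product with itself. *)

theory Defs
  imports "HOL-Analysis.Analysis"
begin

text \<open>A real Euclidean affine space is modelled by a Euclidean space 'a, acting on itself
by translation; the vector from p to x is x - p, and the square of a vector v is v \<bullet> v.\<close>

definition vec :: "'a::real_vector \<Rightarrow> 'a \<Rightarrow> 'a" where
  "vec p x = x - p"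

definition mu0 :: "'a set \<Rightarrow> ('a \<Rightarrow> real) \<Rightarrow> real" where
  "mu0 X w = (\<Sum>x\<in>X. w x)"

definition mu1 :: "'a::real_vector set \<Rightarrow> ('a \<Rightarrow> real) \<Rightarrow> 'a \<Rightarrow> 'a" where
  "mu1 X w p = (\<Sum>x\<in>X. w x *\<^sub>R vec p x)"

end

theory Submission
  imports Defs
begin

lemma mu1_expand:
  fixes X :: "'a::euclidean_space set"
  assumes "finite X"
  shows "mu1 X w p = (\<Sum>z\<in>X. w z *\<^sub>R z) - mu0 X w *\<^sub>R p"
  unfolding mu1_def mu0_def vec_def
  by (simp add: scaleR_diff_right sum_subtractf scaleR_sum_left)

lemma key:
  fixes X :: "'a::euclidean_space set"
  shows "(\<Sum>z\<in>X. w z * (vec x y \<bullet> vec x y - vec y z \<bullet> vec y z + vec z x \<bullet> vec z x))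
     = 2 * ((y - x) \<bullet> mu1 X w x)"
proof -
  have "vec x y \<bullet> vec x y - vec y z \<bullet> vec y z + vec z x \<bullet> vec z x = 2 * ((y - x) \<bullet> (z - x))" for z
    unfolding vec_def
    by (simp add: inner_diff_left inner_diff_right inner_commute[of x y] inner_commute[of x z] inner_commute[of y z] algebra_simps)
  then show ?thesis
    unfolding mu1_def vec_def
    by (simp add: inner_sum_right sum_distrib_left mult.left_commute)
qed

theorem corollary2p6:
  fixes X :: "'a::euclidean_space set" and w :: "'a \<Rightarrow> real"
  assumes "finite X"
  shows "(\<forall>p. mu1 X w p = 0) \<longleftrightarrow>
    (mu0 X w = 0 \<and>
     (\<forall>x\<in>X. \<forall>y\<in>X. (\<Sum>z\<in>X. w z * (vec x y \<bullet> vec x y - vec y z \<bullet> vec y z + vec z x \<bullet> vec z x)) = 0))"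
proof
  assume H: "\<forall>p. mu1 X w p = 0"
  have "mu0 X w *\<^sub>R (One::'a) = mu1 X w 0 - mu1 X w One"
    using mu1_expand[OF assms] by simp
  then have "mu0 X w = 0" using H by simp
  then show "mu0 X w = 0 \<and> (\<forall>x\<in>X. \<forall>y\<in>X. (\<Sum>z\<in>X. w z * (vec x y \<bullet> vec x y - vec y z \<bullet> vec y z + vec z x \<bullet> vec z x)) = 0)"
    using H by (simp add: key)
next
  assume H: "mu0 X w = 0 \<and> (\<forall>x\<in>X. \<forall>y\<in>X. (\<Sum>z\<in>X. w z * (vec x y \<bullet> vec x y - vec y z \<bullet> vec y z + vec z x \<bullet> vec z x)) = 0)"
  show "\<forall>p. mu1 X w p = 0"
  proof (cases "X = {}")
    case True then show ?thesis by (simp add: mu1_def)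
  next
    case False
    then obtain x0 where x0: "x0 \<in> X" by blast
    have m0: "mu0 X w = 0" using H by blast
    have const: "\<And>p. mu1 X w p = mu1 X w x0"
      by (simp only: mu1_expand[OF assms] m0 scaleR_zero_left)
    have orth: "(y - x0) \<bullet> mu1 X w x0 = 0" if y: "y \<in> X" for y
    proof -
      have "2 * ((y - x0) \<bullet> mu1 X w x0) = 0"
        using H x0 y unfolding key by blast
      then show ?thesis by simp
    qed
    have "mu1 X w x0 \<bullet> mu1 X w x0 = (\<Sum>z\<in>X. w z * ((z - x0) \<bullet> mu1 X w x0))"
      by (subst (1) mu1_def) (simp add: vec_def inner_sum_left)
    also have "\<dots> = 0" using orth by simp
    finally have "mu1 X w x0 = 0" by simp
    then show ?thesis using const by simp
  qed
qed

end
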